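(* Assume $K$ is a perfect $A$-field. Let $\Phi$ and $\Psi$ be $\mathbf t$-modules over $K$. Then there is an isomorphism of $\mathbb F_q[t]$-modules $$\operatorname{Ext}^1_\tau(\Phi,\Psi)\cong\operatorname{Ext}^1_\sigma(\Psi^\sigma,\Phi^\sigma).$$
   Context: $A=\mathbb F_q[t]$; $K$ a perfect field of characteristic $p$ with $\mathbb F_q$-algebra map $\iota:A\to K$, $\theta=\iota(t)$. $K\{\tau\}$: twisted polynomials with $\tau x=x^q\tau$; $K\{\sigma\}$: twisted polynomials with $\sigma x=x^{(-1)}\sigma$, where $c^{(-k)}=c^{q^{-k}}$ and $c^{(k)}=c^{q^k}$. A $\mathbf t$-module of dimension $d$ is an $\mathbb F_q$-algebra homomorphism $\Phi:\mathbb F_q[t]\to\mathrm{Mat}_d(K\{\tau\})$ with $\Phi_t=(\theta I+N)+\sum_{i\ge1}M_i\tau^i$, $N$ nilpotent; a $\mathbf t^\sigma$-module is defined identically with $\sigma$ in place of $\tau$. Define $(-)^\sigma:K\{\tau\}\to K\{\sigma\}$ by $(\sum a_i\tau^i)^\sigma=\sum a_i^{(-i)}\sigma^i$, and for a $\mathbf t$-module $\Phi$ of dimension $d$ let $\Phi^\sigma:\mathbb F_q[t]\to\mathrm{Mat}_d(K\{\sigma\})$ be given by $\Phi^\sigma_a=$ the transpose of the matrix obtained by applying $(-)^\sigma$ entrywise to $\Phi_a$ (a $\mathbf t^\sigma$-module). For $\mathbf t$-modules (resp. $\mathbf t^\sigma$-modules) $\Phi$ of dim $d$, $\Psi$ of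 dim $e$: $\mathrm{Der}(\Phi,\Psi)$ is the space of $\mathbb F_q$-linear $\delta:\mathbb F_q[t]\to\mathrm{Mat}_{e\times d}(K\{\tau\})$ (resp. $K\{\sigma\}$) with $\delta(ab)=\Psi_a\delta(b)+\delta(a)\Phi_b$; inner biderivations are $\delta^{(U)}(a)=U\Phi_a-\Psi_aU$; $\operatorname{Ext}^1_\tau(\Phi,\Psi)$ (resp. $\operatorname{Ext}^1_\sigma(\Phi,\Psi)$) is $\mathrm{Der}(\Phi,\Psi)/\mathrm{Der}_{in}(\Phi,\Psi)$ with $\mathbb F_q[t]$-module structure $a*[\delta]=[\Psi_a\delta]$ (equivalently $[\delta\Phi_a]$); it is the group of extensions of $\Phi$ by $\Psi$ in the respective category. *)

theory Defs
  imports "HOL-Computational_Algebra.Polynomial"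
begin

(* Twisted polynomials over K (type 'a) are coefficient sequences nat => 'a
   (with finite support); the twist is an automorphism phi of K:
   (x * tau^i) * (y * tau^j) = x * (phi^^i) y * tau^(i+j). *)

definition frob :: "nat \<Rightarrow> 'a::field \<Rightarrow> 'a" where
  "frob q x = x ^ q"

definition tw_tau :: "nat \<Rightarrow> 'a::field \<Rightarrow> 'a" where
  "tw_tau q = frob q"

definition tw_sigma :: "nat \<Rightarrow> 'a::field \<Rightarrow> 'a" where
  "tw_sigma q = inv (frob q)"

(* F_q inside K and A = F_q[t] as polynomials with coefficients in F_q *)
definition Fq :: "nat \<Rightarrow> 'a::field set" where
  "Fq q = {x. x ^ q = x}"

definition Aq :: "nat \<Rightarrow> 'a::field poly set" where
  "Aq q = {a. \<forall>i. coeff a i \<in> Fq q}"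

definition tp_mult :: "('a \<Rightarrow> 'a) \<Rightarrow> (nat \<Rightarrow> 'a::field) \<Rightarrow> (nat \<Rightarrow> 'a) \<Rightarrow> nat \<Rightarrow> 'a" where
  "tp_mult phi f g = (\<lambda>n. \<Sum>i\<le>n. f i * (phi ^^ i) (g (n - i)))"

(* matrices with entries twisted polynomials: M i j n = coefficient of tau^n in entry (i,j) *)
type_synonym 'a tmat = "nat \<Rightarrow> nat \<Rightarrow> nat \<Rightarrow> 'a"

definition is_tmat :: "nat \<Rightarrow> nat \<Rightarrow> 'a::field tmat \<Rightarrow> bool" where
  "is_tmat m k M \<longleftrightarrow> (\<forall>i j. (m \<le> i \<or> k \<le> j) \<longrightarrow> M i j = (\<lambda>_. 0))
                      \<and> (\<forall>i j. finite {n. M i j n \<noteq> 0})"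

definition tm_zero :: "'a::field tmat" where
  "tm_zero = (\<lambda>i j n. 0)"

definition tm_id :: "nat \<Rightarrow> 'a::field tmat" where
  "tm_id d = (\<lambda>i j n. if i = j \<and> i < d \<and> n = 0 then 1 else 0)"

definition tm_add :: "'a::field tmat \<Rightarrow> 'a tmat \<Rightarrow> 'a tmat" where
  "tm_add M N = (\<lambda>i j n. M i j n + N i j n)"

definition tm_diff :: "'a::field tmat \<Rightarrow> 'a tmat \<Rightarrow> 'a tmat" where
  "tm_diff M N = (\<lambda>i j n. M i j n - N i j n)"

definition tm_scal :: "'a::field \<Rightarrow> 'a tmat \<Rightarrow> 'a tmat" where
  "tm_scal c M = (\<lambda>i j n. c * M i j n)"

definition tm_mult :: "('a \<Rightarrow> 'a) \<Rightarrow> nat \<Rightarrow> 'a::field tmat \<Rightarrow> 'a tmat \<Rightarrow> 'a tmat" where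
  "tm_mult phi k M N = (\<lambda>i j n. \<Sum>l<k. tp_mult phi (M i l) (N l j) n)"

definition km_mult :: "nat \<Rightarrow> (nat \<Rightarrow> nat \<Rightarrow> 'a::field) \<Rightarrow> (nat \<Rightarrow> nat \<Rightarrow> 'a) \<Rightarrow> nat \<Rightarrow> nat \<Rightarrow> 'a" where
  "km_mult d X Y = (\<lambda>i j. \<Sum>l<d. X i l * Y l j)"

fun km_pow :: "nat \<Rightarrow> (nat \<Rightarrow> nat \<Rightarrow> 'a::field) \<Rightarrow> nat \<Rightarrow> nat \<Rightarrow> nat \<Rightarrow> 'a" where
  "km_pow d X 0 = (\<lambda>i j. if i = j then 1 else 0)"
| "km_pow d X (Suc k) = km_mult d X (km_pow d X k)"

(* A t-module (phi = tw_tau q) or t^sigma-module (phi = tw_sigma q) of dimension d: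
   an F_q-algebra homomorphism F_q[t] -> Mat_d(K{phi}) (extended by 0 outside A),
   with Phi_t = (theta I + N) + sum_{i>=1} M_i tau^i, N nilpotent. *)
definition tw_module :: "('a \<Rightarrow> 'a) \<Rightarrow> nat \<Rightarrow> 'a::field \<Rightarrow> nat \<Rightarrow> ('a poly \<Rightarrow> 'a tmat) \<Rightarrow> bool" where
  "tw_module phi q \<theta> d Phi \<longleftrightarrow>
     (\<forall>a. a \<notin> Aq q \<longrightarrow> Phi a = tm_zero)
   \<and> (\<forall>a\<in>Aq q. is_tmat d d (Phi a))
   \<and> Phi 1 = tm_id d
   \<and> (\<forall>a\<in>Aq q. \<forall>b\<in>Aq q. Phi (a + b) = tm_add (Phi a) (Phi b))
   \<and> (\<forall>a\<in>Aq q. \<forall>b\<in>Aq q. Phi (a * b) = tm_mult phi d (Phi a) (Phi b))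
   \<and> (\<forall>c\<in>Fq q. \<forall>a\<in>Aq q. Phi (smult c a) = tm_scal c (Phi a))
   \<and> (\<exists>k. \<forall>i<d. \<forall>j<d.
        km_pow d (\<lambda>i j. Phi [:0, 1:] i j 0 - (if i = j then \<theta> else 0)) k i j = 0)"

definition t_module :: "nat \<Rightarrow> 'a::field \<Rightarrow> nat \<Rightarrow> ('a poly \<Rightarrow> 'a tmat) \<Rightarrow> bool" where
  "t_module q \<theta> d Phi = tw_module (tw_tau q) q \<theta> d Phi"

(* (-)^sigma : sum a_i tau^i  |->  sum a_i^(q^-i) sigma^i, and Phi^sigma = transpose *)
definition sigma_map :: "nat \<Rightarrow> (nat \<Rightarrow> 'a::field) \<Rightarrow> nat \<Rightarrow> 'a" where
  "sigma_map q f = (\<lambda>i. (inv (frob q) ^^ i) (f i))"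

definition sigma_dual :: "nat \<Rightarrow> ('a::field poly \<Rightarrow> 'a tmat) \<Rightarrow> 'a poly \<Rightarrow> 'a tmat" where
  "sigma_dual q Phi = (\<lambda>a i j. sigma_map q (Phi a j i))"

definition Der :: "('a \<Rightarrow> 'a) \<Rightarrow> nat \<Rightarrow> nat \<Rightarrow> nat \<Rightarrow> ('a::field poly \<Rightarrow> 'a tmat) \<Rightarrow> ('a poly \<Rightarrow> 'a tmat)
                   \<Rightarrow> ('a poly \<Rightarrow> 'a tmat) set" where
  "Der phi q d e Phi Psi = {\<delta>.
      (\<forall>a. a \<notin> Aq q \<longrightarrow> \<delta> a = tm_zero)
    \<and> (\<forall>a\<in>Aq q. is_tmat e d (\<delta> a))
    \<and> (\<forall>a\<in>Aq q. \<forall>b\<in>Aq q. \<delta> (a + b) = tm_add (\<delta> a) (\<delta> b))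
    \<and> (\<forall>c\<in>Fq q. \<forall>a\<in>Aq q. \<delta> (smult c a) = tm_scal c (\<delta> a))
    \<and> (\<forall>a\<in>Aq q. \<forall>b\<in>Aq q.
         \<delta> (a * b) = tm_add (tm_mult phi e (Psi a) (\<delta> b)) (tm_mult phi d (\<delta> a) (Phi b)))}"

definition Der_in :: "('a \<Rightarrow> 'a) \<Rightarrow> nat \<Rightarrow> nat \<Rightarrow> nat \<Rightarrow> ('a::field poly \<Rightarrow> 'a tmat) \<Rightarrow> ('a poly \<Rightarrow> 'a tmat)
                   \<Rightarrow> ('a poly \<Rightarrow> 'a tmat) set" where
  "Der_in phi q d e Phi Psi = {\<delta>. \<exists>U. is_tmat e d U \<and>
      \<delta> = (\<lambda>a. if a \<in> Aq q then tm_diff (tm_mult phi d U (Phi a)) (tm_mult phi e (Psi a) U)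
                else tm_zero)}"

definition ext_rel :: "('a \<Rightarrow> 'a) \<Rightarrow> nat \<Rightarrow> nat \<Rightarrow> nat \<Rightarrow> ('a::field poly \<Rightarrow> 'a tmat) \<Rightarrow> ('a poly \<Rightarrow> 'a tmat)
                   \<Rightarrow> (('a poly \<Rightarrow> 'a tmat) \<times> ('a poly \<Rightarrow> 'a tmat)) set" where
  "ext_rel phi q d e Phi Psi = {(x, y). x \<in> Der phi q d e Phi Psi \<and> y \<in> Der phi q d e Phi Psi
      \<and> (\<lambda>a. tm_diff (x a) (y a)) \<in> Der_in phi q d e Phi Psi}"

definition Ext1 :: "('a \<Rightarrow> 'a) \<Rightarrow> nat \<Rightarrow> nat \<Rightarrow> nat \<Rightarrow> ('a::field poly \<Rightarrow> 'a tmat) \<Rightarrow> ('a poly \<Rightarrow> 'a tmat)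
                   \<Rightarrow> ('a poly \<Rightarrow> 'a tmat) set set" where
  "Ext1 phi q d e Phi Psi = Der phi q d e Phi Psi // ext_rel phi q d e Phi Psi"

definition ext_add :: "('a \<Rightarrow> 'a) \<Rightarrow> nat \<Rightarrow> nat \<Rightarrow> nat \<Rightarrow> ('a::field poly \<Rightarrow> 'a tmat) \<Rightarrow> ('a poly \<Rightarrow> 'a tmat)
                   \<Rightarrow> ('a poly \<Rightarrow> 'a tmat) set \<Rightarrow> ('a poly \<Rightarrow> 'a tmat) set \<Rightarrow> ('a poly \<Rightarrow> 'a tmat) set" where
  "ext_add phi q d e Phi Psi X Y = ext_rel phi q d e Phi Psi ``
      {\<lambda>a. tm_add ((SOME \<delta>. \<delta> \<in> X) a) ((SOME \<delta>. \<delta> \<in> Y) a)}"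

definition ext_smul :: "('a \<Rightarrow> 'a) \<Rightarrow> nat \<Rightarrow> nat \<Rightarrow> nat \<Rightarrow> ('a::field poly \<Rightarrow> 'a tmat) \<Rightarrow> ('a poly \<Rightarrow> 'a tmat)
                   \<Rightarrow> 'a poly \<Rightarrow> ('a poly \<Rightarrow> 'a tmat) set \<Rightarrow> ('a poly \<Rightarrow> 'a tmat) set" where
  "ext_smul phi q d e Phi Psi a X = ext_rel phi q d e Phi Psi ``
      {\<lambda>b. tm_mult phi e (Psi a) ((SOME \<delta>. \<delta> \<in> X) b)}"

definition ext_iso ::
  "nat \<Rightarrow> ('a \<Rightarrow> 'a) \<Rightarrow> nat \<Rightarrow> nat \<Rightarrow> ('a::field poly \<Rightarrow> 'a tmat) \<Rightarrow> ('a poly \<Rightarrow> 'a tmat)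
   \<Rightarrow> ('a \<Rightarrow> 'a) \<Rightarrow> nat \<Rightarrow> nat \<Rightarrow> ('a poly \<Rightarrow> 'a tmat) \<Rightarrow> ('a poly \<Rightarrow> 'a tmat) \<Rightarrow> bool" where
  "ext_iso q phi d e Phi Psi phi' d' e' Phi' Psi' \<longleftrightarrow>
     (\<exists>F. bij_betw F (Ext1 phi q d e Phi Psi) (Ext1 phi' q d' e' Phi' Psi')
        \<and> (\<forall>X\<in>Ext1 phi q d e Phi Psi. \<forall>Y\<in>Ext1 phi q d e Phi Psi.
              F (ext_add phi q d e Phi Psi X Y) = ext_add phi' q d' e' Phi' Psi' (F X) (F Y))
        \<and> (\<forall>a\<in>Aq q. \<forall>X\<in>Ext1 phi q d e Phi Psi.
              F (ext_smul phi q d e Phi Psi a X) = ext_smul phi' q d' e' Phi' Psi' a (F X)))"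

end

theory Submission
  imports Defs "HOL-Computational_Algebra.Primes"
begin


definition rh :: "('a::field \<Rightarrow> 'a) \<Rightarrow> bool" where
  "rh f \<longleftrightarrow> (\<forall>x y. f (x + y) = f x + f y) \<and> (\<forall>x y. f (x * y) = f x * f y)"

lemma rh_add: "rh f \<Longrightarrow> f (x + y) = f x + f y" by (simp add: rh_def)
lemma rh_mult: "rh f \<Longrightarrow> f (x * y) = f x * f y" by (simp add: rh_def)
lemma rh_zero: assumes "rh f" shows "f 0 = 0"
  using rh_add[of f 0 0] assms by (metis add.right_neutral add_left_cancel)
lemma rh_neg: "rh f \<Longrightarrow> f (- x) = - f x"
  using rh_add[of f x "-x"] rh_zero[of f] by (metis minus_unique add.right_inverse)
lemma rh_diff: "rh f \<Longrightarrow> f (x - y) = f x - f y"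
  using rh_add[of f x "-y"] rh_neg[of f y] by simp
lemma rh_sum: "rh f \<Longrightarrow> f (sum g S) = (\<Sum>s\<in>S. f (g s))"
  by (induction S rule: infinite_finite_induct) (auto simp: rh_zero rh_add)
lemma rh_funpow: "rh f \<Longrightarrow> rh (f ^^ n)"
  by (induction n) (auto simp: rh_def)
lemma funpow_fix: "f c = c \<Longrightarrow> (f ^^ n) c = c"
  by (induction n) auto

lemma tp_add_left: "tp_mult phi (\<lambda>n. f n + g n) h n = tp_mult phi f h n + tp_mult phi g h n"
  by (simp add: tp_mult_def distrib_right sum.distrib)
lemma tp_add_right: "rh phi \<Longrightarrow> tp_mult phi f (\<lambda>n. g n + h n) n = tp_mult phi f g n + tp_mult phi f h n"
  by (simp add: tp_mult_def rh_add[OF rh_funpow] distrib_left sum.distrib)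
lemma tp_neg_left: "tp_mult phi (\<lambda>n. - f n) h n = - tp_mult phi f h n"
  by (simp add: tp_mult_def sum_negf)
lemma tp_neg_right: "rh phi \<Longrightarrow> tp_mult phi f (\<lambda>n. - g n) n = - tp_mult phi f g n"
  by (simp add: tp_mult_def rh_neg[OF rh_funpow] sum_negf)
lemma tp_diff_left: "tp_mult phi (\<lambda>n. f n - g n) h n = tp_mult phi f h n - tp_mult phi g h n"
  by (simp add: tp_mult_def left_diff_distrib sum_subtractf)
lemma tp_diff_right: "rh phi \<Longrightarrow> tp_mult phi f (\<lambda>n. g n - h n) n = tp_mult phi f g n - tp_mult phi f h n"
  by (simp add: tp_mult_def rh_diff[OF rh_funpow] right_diff_distrib sum_subtractf)
lemma tp_zero_left: "tp_mult phi (\<lambda>n. 0) h n = 0"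
  by (simp add: tp_mult_def)
lemma tp_zero_right: "rh phi \<Longrightarrow> tp_mult phi f (\<lambda>n. 0) n = 0"
  by (simp add: tp_mult_def rh_zero[OF rh_funpow])
lemma tp_scal_left: "tp_mult phi (\<lambda>n. c * f n) h n = c * tp_mult phi f h n"
  by (simp add: tp_mult_def sum_distrib_left mult.assoc)
lemma tp_scal_right: "rh phi \<Longrightarrow> phi c = c \<Longrightarrow> tp_mult phi f (\<lambda>n. c * g n) n = c * tp_mult phi f g n"
  by (simp add: tp_mult_def rh_mult[OF rh_funpow] funpow_fix sum_distrib_left mult_ac)
lemma tp_sum_left: "tp_mult phi (\<lambda>n. \<Sum>s\<in>S. F s n) h n = (\<Sum>s\<in>S. tp_mult phi (F s) h n)"
  unfolding tp_mult_def by (simp add: sum_distrib_right sum.swap[of _ S])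
lemma tp_sum_right: "rh phi \<Longrightarrow> tp_mult phi f (\<lambda>n. \<Sum>s\<in>S. F s n) n = (\<Sum>s\<in>S. tp_mult phi f (F s) n)"
  unfolding tp_mult_def by (simp add: rh_sum[OF rh_funpow] sum_distrib_left sum.swap[of _ S])

lemma tp_assoc:
  assumes "rh phi"
  shows "tp_mult phi (tp_mult phi f g) h n = tp_mult phi f (tp_mult phi g h) n"
proof -
  define T where "T = (\<lambda>j k. f j * (phi ^^ j) (g k) * (phi ^^ (j + k)) (h (n - j - k)))"
  have "tp_mult phi (tp_mult phi f g) h n
      = (\<Sum>i\<le>n. \<Sum>j\<le>i. f j * (phi ^^ j) (g (i - j)) * (phi ^^ i) (h (n - i)))"
    by (simp add: tp_mult_def sum_distrib_right)
  also have "\<dots> = (\<Sum>i\<le>n. \<Sum>j\<le>i. T j (i - j))"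
    by (intro sum.cong refl) (simp add: T_def)
  also have "\<dots> = (\<Sum>(j,k)\<in>{(j,k). j + k \<le> n}. T j k)"
    by (rule sum.triangle_reindex_eq[symmetric])
  also have "{(j,k). j + k \<le> n} = Sigma {..n} (\<lambda>j. {..n-j})"
    by auto
  also have "(\<Sum>(j,k)\<in>Sigma {..n} (\<lambda>j. {..n-j}). T j k) = (\<Sum>j\<le>n. \<Sum>k\<le>n-j. T j k)"
    by (rule sum.Sigma[symmetric]) auto
  also have "\<dots> = tp_mult phi f (tp_mult phi g h) n"
    unfolding tp_mult_def T_def
    by (intro sum.cong refl)
       (simp add: rh_sum[OF rh_funpow[OF assms]] rh_mult[OF rh_funpow[OF assms]] sum_distrib_left
          funpow_add mult.assoc diff_diff_add)
  finally show ?thesis .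
qed

lemma sum_atMost_flip: "(\<Sum>i\<le>(n::nat). F i) = (\<Sum>i\<le>n. F (n - i))"
  by (rule sum.reindex_bij_witness[where i="\<lambda>i. n - i" and j="\<lambda>i. n - i"]) auto

lemma funpow_inv:
  fixes phi psi :: "'a \<Rightarrow> 'a"
  assumes inv: "\<And>x. psi (phi x) = x"
  shows "(psi ^^ i) ((phi ^^ i) x) = x"
proof (induction i arbitrary: x)
  case 0 then show ?case by simp
next
  case (Suc i)
  have "(psi ^^ Suc i) ((phi ^^ Suc i) x) = (psi ^^ i) (psi (phi ((phi ^^ i) x)))"
    by (simp only: funpow_Suc_right[of i psi] funpow.simps(2)[of i phi] o_apply)
  then show ?case using Suc inv by simp
qed

lemma funpow_inv2:
  fixes phi psi :: "'a \<Rightarrow> 'a"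
  assumes "\<And>x. psi (phi x) = x" "i \<le> n"
  shows "(psi ^^ n) ((phi ^^ i) x) = (psi ^^ (n - i)) x"
proof -
  have "psi ^^ n = (psi ^^ (n - i)) \<circ> (psi ^^ i)"
    using assms(2) by (simp add: funpow_add[symmetric])
  then show ?thesis using funpow_inv[of psi phi, OF assms(1)] by simp
qed

lemma funpow_split: "x \<le> n \<Longrightarrow> (f ^^ x) ((f ^^ (n - x)) y) = (f ^^ n) y"
  by (metis funpow_add le_add_diff_inverse o_apply)

lemma tp_anti:
  assumes "rh psi" "\<And>x. psi (phi x) = x"
  shows "(psi ^^ n) (tp_mult phi f g n)
       = tp_mult psi (\<lambda>i. (psi ^^ i) (g i)) (\<lambda>i. (psi ^^ i) (f i)) n"
proof -
  have "(psi ^^ n) (tp_mult phi f g n) = (\<Sum>i\<le>n. (psi ^^ n) (f i) * (psi ^^ (n - i)) (g (n - i)))"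
    unfolding tp_mult_def
    by (simp add: rh_sum[OF rh_funpow[OF assms(1)]] rh_mult[OF rh_funpow[OF assms(1)]]
          funpow_inv2[of psi phi, OF assms(2)])
  also have "\<dots> = (\<Sum>i\<le>n. (psi ^^ n) (f (n - i)) * (psi ^^ i) (g i))"
    by (subst sum_atMost_flip) (intro sum.cong refl, simp)
  also have "\<dots> = tp_mult psi (\<lambda>i. (psi ^^ i) (g i)) (\<lambda>i. (psi ^^ i) (f i)) n"
    unfolding tp_mult_def
    by (intro sum.cong refl) (simp add: funpow_split mult.commute)
  finally show ?thesis .
qed

lemma fs_bound:
  fixes f :: "nat \<Rightarrow> 'a::zero"
  shows "finite {n. f n \<noteq> 0} \<longleftrightarrow> (\<exists>A. \<forall>n>A. f n = 0)"
proof
  assume "finite {n. f n \<noteq> 0}"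
  then have "\<exists>m. \<forall>n\<in>{n. f n \<noteq> 0}. n \<le> m"
    using finite_nat_set_iff_bounded_le by blast
  then obtain m where m: "\<forall>n\<in>{n. f n \<noteq> 0}. n \<le> m" by blast
  have "\<forall>n>m. f n = 0"
  proof (intro allI impI)
    fix n assume "n > m"
    then show "f n = 0" using m not_le by blast
  qed
  then show "\<exists>A. \<forall>n>A. f n = 0" by blast
next
  assume "\<exists>A. \<forall>n>A. f n = 0"
  then obtain A where "\<forall>n>A. f n = 0" by blast
  then have "{n. f n \<noteq> 0} \<subseteq> {..A}"
  proof (intro subsetI)
    fix n assume "\<forall>n>A. f n = 0" "n \<in> {n. f n \<noteq> 0}"
    then have "\<not> n > A" by auto
    then show "n \<in> {..A}" by simp
  qed
  then show "finite {n. f n \<noteq> 0}" by (rule finite_subset) simp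
qed

lemma fs_tp:
  assumes "rh phi" "finite {n. f n \<noteq> 0}" "finite {n. g n \<noteq> 0}"
  shows "finite {n. tp_mult phi f g n \<noteq> 0}"
proof -
  obtain A where A: "\<forall>n>A. f n = 0" using assms(2) fs_bound by blast
  obtain B where B: "\<forall>n>B. g n = 0" using assms(3) fs_bound by blast
  have "\<forall>n>A+B. tp_mult phi f g n = 0"
  proof (intro allI impI)
    fix n assume n: "n > A + B"
    have "\<And>i. i \<le> n \<Longrightarrow> f i * (phi ^^ i) (g (n - i)) = 0"
    proof -
      fix i assume "i \<le> n"
      show "f i * (phi ^^ i) (g (n - i)) = 0"
      proof (cases "i > A")
        case True then show ?thesis using A by simp
      next
        case False then have "n - i > B" using n by simp
        then show ?thesis using B rh_zero[OF rh_funpow[OF assms(1)]] by simp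
      qed
    qed
    then show "tp_mult phi f g n = 0" unfolding tp_mult_def by (auto intro!: sum.neutral)
  qed
  then show ?thesis using fs_bound by blast
qed

lemma fs_sum:
  assumes "finite S" "\<forall>s\<in>S. finite {n. F s n \<noteq> 0}"
  shows "finite {n. (\<Sum>s\<in>S. F s n) \<noteq> (0::'a::comm_monoid_add)}"
proof -
  have "{n. (\<Sum>s\<in>S. F s n) \<noteq> 0} \<subseteq> (\<Union>s\<in>S. {n. F s n \<noteq> 0})"
  proof
    fix n assume a: "n \<in> {n. (\<Sum>s\<in>S. F s n) \<noteq> 0}"
    show "n \<in> (\<Union>s\<in>S. {n. F s n \<noteq> 0})"
    proof (rule ccontr)
      assume "n \<notin> (\<Union>s\<in>S. {n. F s n \<noteq> 0})"
      then have "\<forall>s\<in>S. F s n = 0" by blast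
      then have "(\<Sum>s\<in>S. F s n) = 0" by simp
      with a show False by simp
    qed
  qed
  moreover have "finite (\<Union>s\<in>S. {n. F s n \<noteq> 0})" using assms by blast
  ultimately show ?thesis by (rule finite_subset)
qed




definition tm_neg :: "'a::field tmat \<Rightarrow> 'a tmat" where
  "tm_neg M = (\<lambda>i j n. - M i j n)"

definition Gd :: "('a \<Rightarrow> 'a) \<Rightarrow> 'a::field tmat \<Rightarrow> 'a tmat" where
  "Gd psi M = (\<lambda>i j n. (psi ^^ n) (M j i n))"

lemma tm_add_left: "tm_mult phi k (tm_add M N) P = tm_add (tm_mult phi k M P) (tm_mult phi k N P)"
  by (simp add: tm_mult_def tm_add_def tp_add_left sum.distrib)
lemma tm_add_right: "rh phi \<Longrightarrow> tm_mult phi k P (tm_add M N) = tm_add (tm_mult phi k P M) (tm_mult phi k P N)"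
  by (simp add: tm_mult_def tm_add_def tp_add_right sum.distrib)
lemma tm_diff_left: "tm_mult phi k (tm_diff M N) P = tm_diff (tm_mult phi k M P) (tm_mult phi k N P)"
  by (simp add: tm_mult_def tm_diff_def tp_diff_left sum_subtractf)
lemma tm_diff_right: "rh phi \<Longrightarrow> tm_mult phi k P (tm_diff M N) = tm_diff (tm_mult phi k P M) (tm_mult phi k P N)"
  by (simp add: tm_mult_def tm_diff_def tp_diff_right sum_subtractf)
lemma tm_neg_left: "tm_mult phi k (tm_neg M) P = tm_neg (tm_mult phi k M P)"
  by (simp add: tm_mult_def tm_neg_def tp_neg_left sum_negf)
lemma tm_neg_right: "rh phi \<Longrightarrow> tm_mult phi k P (tm_neg M) = tm_neg (tm_mult phi k P M)"
  by (simp add: tm_mult_def tm_neg_def tp_neg_right sum_negf)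
lemma tm_zero_left: "tm_mult phi k tm_zero P = tm_zero"
  by (simp add: tm_mult_def tm_zero_def tp_zero_left)
lemma tm_zero_right: "rh phi \<Longrightarrow> tm_mult phi k P tm_zero = tm_zero"
  by (simp add: tm_mult_def tm_zero_def tp_zero_right)
lemma tm_scal_left: "tm_mult phi k (tm_scal c M) P = tm_scal c (tm_mult phi k M P)"
  by (simp add: tm_mult_def tm_scal_def tp_scal_left sum_distrib_left)
lemma tm_scal_right: "rh phi \<Longrightarrow> phi c = c \<Longrightarrow> tm_mult phi k P (tm_scal c M) = tm_scal c (tm_mult phi k P M)"
  by (simp add: tm_mult_def tm_scal_def tp_scal_right sum_distrib_left)
lemma tm_assoc:
  assumes "rh phi"
  shows "tm_mult phi k2 (tm_mult phi k1 M N) P = tm_mult phi k1 M (tm_mult phi k2 N P)"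
proof (intro ext)
  fix i j n
  have "tm_mult phi k2 (tm_mult phi k1 M N) P i j n
      = (\<Sum>l<k2. \<Sum>l'<k1. tp_mult phi (M i l') (tp_mult phi (N l' l) (P l j)) n)"
    unfolding tm_mult_def by (simp add: tp_sum_left tp_assoc[OF assms])
  also have "\<dots> = (\<Sum>l'<k1. \<Sum>l<k2. tp_mult phi (M i l') (tp_mult phi (N l' l) (P l j)) n)"
    by (rule sum.swap)
  also have "\<dots> = tm_mult phi k1 M (tm_mult phi k2 N P) i j n"
    unfolding tm_mult_def by (simp add: tp_sum_right[OF assms])
  finally show "tm_mult phi k2 (tm_mult phi k1 M N) P i j n = tm_mult phi k1 M (tm_mult phi k2 N P) i j n" .
qed

lemma fin_add:
  assumes "finite {n. f n \<noteq> 0}" "finite {n. g n \<noteq> 0}"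
  shows "finite {n. f n + g n \<noteq> (0::'a::field)}"
proof -
  have "{n. f n + g n \<noteq> 0} \<subseteq> {n. f n \<noteq> 0} \<union> {n. g n \<noteq> 0}" by auto
  then show ?thesis using assms finite_subset by blast
qed
lemma fin_diff:
  assumes "finite {n. f n \<noteq> 0}" "finite {n. g n \<noteq> 0}"
  shows "finite {n. f n - g n \<noteq> (0::'a::field)}"
proof -
  have "{n. f n - g n \<noteq> 0} \<subseteq> {n. f n \<noteq> 0} \<union> {n. g n \<noteq> 0}" by auto
  then show ?thesis using assms finite_subset by blast
qed
lemma fin_neg:
  assumes "finite {n. f n \<noteq> 0}"
  shows "finite {n. - f n \<noteq> (0::'a::field)}"
  using assms by simp
lemma fin_scal:
  assumes "finite {n. f n \<noteq> 0}"
  shows "finite {n. c * f n \<noteq> (0::'a::field)}"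
proof -
  have "{n. c * f n \<noteq> 0} \<subseteq> {n. f n \<noteq> 0}" by auto
  then show ?thesis using assms finite_subset by blast
qed
lemma fin_map:
  assumes "rh psi" "finite {n. f n \<noteq> 0}"
  shows "finite {n. (psi ^^ n) (f n) \<noteq> (0::'a::field)}"
proof -
  have "{n. (psi ^^ n) (f n) \<noteq> 0} \<subseteq> {n. f n \<noteq> 0}"
    using rh_zero[OF rh_funpow[OF assms(1)]] by auto
  then show ?thesis using assms finite_subset by blast
qed

lemma is_tmat_zero: "is_tmat m k tm_zero"
  by (simp add: is_tmat_def tm_zero_def)
lemma is_tmat_add:
  assumes "is_tmat m k M" "is_tmat m k N" shows "is_tmat m k (tm_add M N)"
  unfolding is_tmat_def
proof (intro conjI allI impI)
  fix i j assume "m \<le> i \<or> k \<le> j"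
  then show "tm_add M N i j = (\<lambda>_. 0)" using assms unfolding is_tmat_def tm_add_def by auto
next
  fix i j show "finite {n. tm_add M N i j n \<noteq> 0}"
    unfolding tm_add_def using assms unfolding is_tmat_def by (intro fin_add) auto
qed
lemma is_tmat_diff:
  assumes "is_tmat m k M" "is_tmat m k N" shows "is_tmat m k (tm_diff M N)"
  unfolding is_tmat_def
proof (intro conjI allI impI)
  fix i j assume "m \<le> i \<or> k \<le> j"
  then show "tm_diff M N i j = (\<lambda>_. 0)" using assms unfolding is_tmat_def tm_diff_def by auto
next
  fix i j show "finite {n. tm_diff M N i j n \<noteq> 0}"
    unfolding tm_diff_def using assms unfolding is_tmat_def by (intro fin_diff) auto
qed
lemma is_tmat_neg:
  assumes "is_tmat m k M" shows "is_tmat m k (tm_neg M)"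
  unfolding is_tmat_def
proof (intro conjI allI impI)
  fix i j assume "m \<le> i \<or> k \<le> j"
  then show "tm_neg M i j = (\<lambda>_. 0)" using assms unfolding is_tmat_def tm_neg_def by auto
next
  fix i j show "finite {n. tm_neg M i j n \<noteq> 0}"
    unfolding tm_neg_def using assms unfolding is_tmat_def by (intro fin_neg) auto
qed
lemma is_tmat_scal:
  assumes "is_tmat m k M" shows "is_tmat m k (tm_scal c M)"
  unfolding is_tmat_def
proof (intro conjI allI impI)
  fix i j assume "m \<le> i \<or> k \<le> j"
  then show "tm_scal c M i j = (\<lambda>_. 0)" using assms unfolding is_tmat_def tm_scal_def by auto
next
  fix i j show "finite {n. tm_scal c M i j n \<noteq> 0}"
    unfolding tm_scal_def using assms unfolding is_tmat_def by (intro fin_scal) auto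
qed
lemma is_tmat_mult:
  assumes "rh phi" "is_tmat m k M" "is_tmat k l N"
  shows "is_tmat m l (tm_mult phi k M N)"
  unfolding is_tmat_def
proof (intro conjI allI impI)
  fix i j assume "m \<le> i \<or> l \<le> j"
  then show "tm_mult phi k M N i j = (\<lambda>_. 0)"
  proof
    assume "m \<le> i"
    then have "\<And>x. M i x = (\<lambda>_. 0)" using assms(2) unfolding is_tmat_def by blast
    then show ?thesis unfolding tm_mult_def by (simp add: tp_zero_left)
  next
    assume "l \<le> j"
    then have "\<And>x. N x j = (\<lambda>_. 0)" using assms(3) unfolding is_tmat_def by blast
    then show ?thesis unfolding tm_mult_def by (simp add: tp_zero_right[OF assms(1)])
  qed
next
  fix i j
  show "finite {n. tm_mult phi k M N i j n \<noteq> 0}"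
  proof -
    have "\<And>s. finite {n. tp_mult phi (M i s) (N s j) n \<noteq> 0}"
      using fs_tp[OF assms(1)] assms(2,3) unfolding is_tmat_def by blast
    then show ?thesis unfolding tm_mult_def by (intro fs_sum) auto
  qed
qed

lemma Gd_add: "rh psi \<Longrightarrow> Gd psi (tm_add M N) = tm_add (Gd psi M) (Gd psi N)"
  by (simp add: Gd_def tm_add_def rh_add[OF rh_funpow])
lemma Gd_diff: "rh psi \<Longrightarrow> Gd psi (tm_diff M N) = tm_diff (Gd psi M) (Gd psi N)"
  by (simp add: Gd_def tm_diff_def rh_diff[OF rh_funpow])
lemma Gd_neg: "rh psi \<Longrightarrow> Gd psi (tm_neg M) = tm_neg (Gd psi M)"
  by (simp add: Gd_def tm_neg_def rh_neg[OF rh_funpow])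
lemma Gd_zero: "rh psi \<Longrightarrow> Gd psi tm_zero = tm_zero"
  by (simp add: Gd_def tm_zero_def rh_zero[OF rh_funpow])
lemma Gd_scal: "rh psi \<Longrightarrow> psi c = c \<Longrightarrow> Gd psi (tm_scal c M) = tm_scal c (Gd psi M)"
  by (simp add: Gd_def tm_scal_def rh_mult[OF rh_funpow] funpow_fix)
lemma Gd_mult:
  fixes phi psi :: "'a::field \<Rightarrow> 'a"
  assumes "rh psi" "\<And>x. psi (phi x) = x"
  shows "Gd psi (tm_mult phi k M N) = tm_mult psi k (Gd psi N) (Gd psi M)"
  unfolding Gd_def tm_mult_def
  by (simp add: rh_sum[OF rh_funpow[OF assms(1)]] tp_anti[of psi phi, OF assms])
lemma Gd_Gd:
  fixes phi psi :: "'a::field \<Rightarrow> 'a"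
  assumes "\<And>x. phi (psi x) = x"
  shows "Gd phi (Gd psi M) = M"
  unfolding Gd_def by (simp add: funpow_inv[of phi psi, OF assms])
lemma is_tmat_Gd:
  assumes "rh psi" "is_tmat m k M" shows "is_tmat k m (Gd psi M)"
  unfolding is_tmat_def
proof (intro conjI allI impI)
  fix i j assume "k \<le> i \<or> m \<le> j"
  then show "Gd psi M i j = (\<lambda>_. 0)" using assms(2) rh_zero[OF rh_funpow[OF assms(1)]]
    unfolding is_tmat_def Gd_def by auto
next
  fix i j show "finite {n. Gd psi M i j n \<noteq> 0}"
    unfolding Gd_def using assms unfolding is_tmat_def by (intro fin_map) auto
qed




lemma tm_diff_self: "tm_diff M M = tm_zero"
  by (simp add: tm_diff_def tm_zero_def)
lemma tm_diff_zero: "tm_diff tm_zero tm_zero = tm_zero"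
  by (simp add: tm_diff_def tm_zero_def)
lemma tm_add_zero: "tm_add tm_zero tm_zero = tm_zero"
  by (simp add: tm_add_def tm_zero_def)
lemma tm_neg_zero: "tm_neg tm_zero = tm_zero"
  by (simp add: tm_neg_def tm_zero_def)
lemma tm_diff_anti: "tm_diff B A = tm_neg (tm_diff A B)"
  by (simp add: tm_diff_def tm_neg_def)
lemma tm_diff_neg_neg: "tm_diff (tm_neg A) (tm_neg B) = tm_diff B A"
  by (simp add: tm_diff_def tm_neg_def)
lemma tm_diff_trans: "tm_add (tm_diff A B) (tm_diff B C) = tm_diff A C"
  by (simp add: tm_diff_def tm_add_def)
lemma tm_add_diff_diff: "tm_add (tm_diff A B) (tm_diff C D) = tm_diff (tm_add A C) (tm_add B D)"
  by (simp add: tm_diff_def tm_add_def fun_eq_iff algebra_simps)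
lemma tm_add_comm: "tm_add A B = tm_add B A"
  by (simp add: tm_add_def fun_eq_iff algebra_simps)
lemma tm_add_ac4: "tm_add (tm_add A B) (tm_add C D) = tm_add (tm_add A C) (tm_add B D)"
  by (simp add: tm_add_def fun_eq_iff algebra_simps)
lemma tm_scal_add: "tm_scal c (tm_add A B) = tm_add (tm_scal c A) (tm_scal c B)"
  by (simp add: tm_add_def tm_scal_def fun_eq_iff algebra_simps)

lemma Der_D:
  assumes "\<delta> \<in> Der phi q d e Phi Psi"
  shows "\<And>a. a \<notin> Aq q \<Longrightarrow> \<delta> a = tm_zero"
    and "\<And>a. a \<in> Aq q \<Longrightarrow> is_tmat e d (\<delta> a)"
    and "\<And>a b. a \<in> Aq q \<Longrightarrow> b \<in> Aq q \<Longrightarrow> \<delta> (a + b) = tm_add (\<delta> a) (\<delta> b)"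
    and "\<And>c a. c \<in> Fq q \<Longrightarrow> a \<in> Aq q \<Longrightarrow> \<delta> (smult c a) = tm_scal c (\<delta> a)"
    and "\<And>a b. a \<in> Aq q \<Longrightarrow> b \<in> Aq q \<Longrightarrow>
         \<delta> (a * b) = tm_add (tm_mult phi e (Psi a) (\<delta> b)) (tm_mult phi d (\<delta> a) (Phi b))"
  using assms unfolding Der_def by blast+

lemma rel_D:
  assumes "(x, y) \<in> ext_rel phi q d e Phi Psi"
  obtains U where "x \<in> Der phi q d e Phi Psi" "y \<in> Der phi q d e Phi Psi" "is_tmat e d U"
    "\<And>a. a \<in> Aq q \<Longrightarrow> tm_diff (x a) (y a) = tm_diff (tm_mult phi d U (Phi a)) (tm_mult phi e (Psi a) U)"
proof -
  from assms obtain U where U: "x \<in> Der phi q d e Phi Psi" "y \<in> Der phi q d e Phi Psi" "is_tmat e d U"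
    "(\<lambda>a. tm_diff (x a) (y a)) = (\<lambda>a. if a \<in> Aq q then tm_diff (tm_mult phi d U (Phi a)) (tm_mult phi e (Psi a) U) else tm_zero)"
    unfolding ext_rel_def Der_in_def by blast
  show ?thesis
  proof (rule that[OF U(1-3)])
    fix a :: "'a poly" assume "a \<in> Aq q"
    then show "tm_diff (x a) (y a) = tm_diff (tm_mult phi d U (Phi a)) (tm_mult phi e (Psi a) U)"
      using fun_cong[OF U(4), of a] by simp
  qed
qed

lemma rel_I:
  assumes "x \<in> Der phi q d e Phi Psi" "y \<in> Der phi q d e Phi Psi" "is_tmat e d U"
    "\<And>a. a \<in> Aq q \<Longrightarrow> tm_diff (x a) (y a) = tm_diff (tm_mult phi d U (Phi a)) (tm_mult phi e (Psi a) U)"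
  shows "(x, y) \<in> ext_rel phi q d e Phi Psi"
proof -
  have "(\<lambda>a. tm_diff (x a) (y a)) = (\<lambda>a. if a \<in> Aq q then tm_diff (tm_mult phi d U (Phi a)) (tm_mult phi e (Psi a) U) else tm_zero)"
  proof
    fix a :: "'a poly" show "tm_diff (x a) (y a) = (if a \<in> Aq q then tm_diff (tm_mult phi d U (Phi a)) (tm_mult phi e (Psi a) U) else tm_zero)"
      using assms(4)[of a] Der_D(1)[OF assms(1), of a] Der_D(1)[OF assms(2), of a]
      by (auto simp: tm_diff_zero)
  qed
  then show ?thesis using assms(1-3) unfolding ext_rel_def Der_in_def by blast
qed

lemma rel_equiv:
  assumes "rh phi"
  shows "equiv (Der phi q d e Phi Psi) (ext_rel phi q d e Phi Psi)"
proof (rule equivI)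
  show "ext_rel phi q d e Phi Psi \<subseteq> Der phi q d e Phi Psi \<times> Der phi q d e Phi Psi"
    unfolding ext_rel_def by blast
next
  show "refl_on (Der phi q d e Phi Psi) (ext_rel phi q d e Phi Psi)"
  proof (rule refl_onI)
    fix x assume xD: "x \<in> Der phi q d e Phi Psi"
    show "(x, x) \<in> ext_rel phi q d e Phi Psi"
      by (rule rel_I[OF xD xD is_tmat_zero])
         (simp_all add: tm_diff_self tm_zero_left tm_zero_right[OF assms])
  qed
next
  show "sym (ext_rel phi q d e Phi Psi)"
  proof (rule symI)
    fix x y assume "(x, y) \<in> ext_rel phi q d e Phi Psi"
    then obtain U where U: "x \<in> Der phi q d e Phi Psi" "y \<in> Der phi q d e Phi Psi" "is_tmat e d U"
      "\<And>a. a \<in> Aq q \<Longrightarrow> tm_diff (x a) (y a) = tm_diff (tm_mult phi d U (Phi a)) (tm_mult phi e (Psi a) U)"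
      by (rule rel_D) blast+
    show "(y, x) \<in> ext_rel phi q d e Phi Psi"
    proof (rule rel_I[OF U(2,1) is_tmat_neg[OF U(3)]])
      fix a :: "'a poly" assume "a \<in> Aq q"
      then show "tm_diff (y a) (x a) = tm_diff (tm_mult phi d (tm_neg U) (Phi a)) (tm_mult phi e (Psi a) (tm_neg U))"
      proof -
        have "tm_diff (y a) (x a) = tm_neg (tm_diff (x a) (y a))" by (rule tm_diff_anti)
        also have "\<dots> = tm_neg (tm_diff (tm_mult phi d U (Phi a)) (tm_mult phi e (Psi a) U))"
          using U(4)[OF \<open>a \<in> Aq q\<close>] by simp
        also have "\<dots> = tm_diff (tm_mult phi e (Psi a) U) (tm_mult phi d U (Phi a))"
          by (rule tm_diff_anti[symmetric])
        finally show ?thesis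
          by (simp add: tm_neg_left tm_neg_right[OF assms] tm_diff_neg_neg)
      qed
    qed
  qed
next
  show "trans (ext_rel phi q d e Phi Psi)"
  proof (rule transI)
    fix x y z assume xy: "(x, y) \<in> ext_rel phi q d e Phi Psi" and yz: "(y, z) \<in> ext_rel phi q d e Phi Psi"
    from xy obtain U where U: "x \<in> Der phi q d e Phi Psi" "y \<in> Der phi q d e Phi Psi" "is_tmat e d U"
      "\<And>a. a \<in> Aq q \<Longrightarrow> tm_diff (x a) (y a) = tm_diff (tm_mult phi d U (Phi a)) (tm_mult phi e (Psi a) U)"
      by (rule rel_D) blast+
    from yz obtain V where V: "y \<in> Der phi q d e Phi Psi" "z \<in> Der phi q d e Phi Psi" "is_tmat e d V"
      "\<And>a. a \<in> Aq q \<Longrightarrow> tm_diff (y a) (z a) = tm_diff (tm_mult phi d V (Phi a)) (tm_mult phi e (Psi a) V)"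
      by (rule rel_D) blast+
    show "(x, z) \<in> ext_rel phi q d e Phi Psi"
    proof (rule rel_I[OF U(1) V(2) is_tmat_add[OF U(3) V(3)]])
      fix a :: "'a poly" assume a: "a \<in> Aq q"
      have "tm_diff (x a) (z a) = tm_add (tm_diff (x a) (y a)) (tm_diff (y a) (z a))"
        by (simp add: tm_diff_trans)
      also have "\<dots> = tm_diff (tm_mult phi d (tm_add U V) (Phi a)) (tm_mult phi e (Psi a) (tm_add U V))"
        using U(4)[OF a] V(4)[OF a] by (simp add: tm_add_left tm_add_right[OF assms] tm_add_diff_diff)
      finally show "tm_diff (x a) (z a) = tm_diff (tm_mult phi d (tm_add U V) (Phi a)) (tm_mult phi e (Psi a) (tm_add U V))" .
    qed
  qed
qed


definition hm :: "('a::field \<Rightarrow> 'a) \<Rightarrow> nat \<Rightarrow> nat \<Rightarrow> ('a poly \<Rightarrow> 'a tmat) \<Rightarrow> bool" where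
  "hm phi q d Phi \<longleftrightarrow> (\<forall>a. a \<notin> Aq q \<longrightarrow> Phi a = tm_zero) \<and> (\<forall>a\<in>Aq q. is_tmat d d (Phi a))
     \<and> (\<forall>a\<in>Aq q. \<forall>b\<in>Aq q. Phi (a * b) = tm_mult phi d (Phi a) (Phi b))"

lemma tw_module_hm: "tw_module phi q th d Phi \<Longrightarrow> hm phi q d Phi"
  unfolding tw_module_def hm_def by blast

lemma hm_tmat: "hm phi q d Phi \<Longrightarrow> a \<in> Aq q \<Longrightarrow> is_tmat d d (Phi a)"
  unfolding hm_def by blast

lemma hm_comm:
  assumes "hm phi q d Phi" "a \<in> Aq q" "b \<in> Aq q"
  shows "tm_mult phi d (Phi a) (Phi b) = tm_mult phi d (Phi b) (Phi a)"
proof -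
  have "Phi (a * b) = tm_mult phi d (Phi a) (Phi b)" "Phi (b * a) = tm_mult phi d (Phi b) (Phi a)"
    using assms unfolding hm_def by blast+
  then show ?thesis by (simp add: mult.commute)
qed

lemma tm_add_swap_eq: "tm_add A B = tm_add C D \<Longrightarrow> tm_diff A D = tm_diff C B"
  by (simp add: tm_add_def tm_diff_def fun_eq_iff) (metis add_diff_cancel diff_add_eq add.commute)

lemma Der_add:
  assumes "rh phi" "x \<in> Der phi q d e Phi Psi" "y \<in> Der phi q d e Phi Psi"
  shows "(\<lambda>a. tm_add (x a) (y a)) \<in> Der phi q d e Phi Psi"
  unfolding Der_def
proof (intro CollectI conjI ballI allI impI)
  fix a :: "'a poly"
  assume "a \<notin> Aq q" then show "tm_add (x a) (y a) = tm_zero"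
    using Der_D(1)[OF assms(2)] Der_D(1)[OF assms(3)] by (simp add: tm_add_zero)
next
  fix a :: "'a poly"
  assume "a \<in> Aq q" then show "is_tmat e d (tm_add (x a) (y a))"
    using Der_D(2)[OF assms(2)] Der_D(2)[OF assms(3)] by (simp add: is_tmat_add)
next
  fix a b :: "'a poly"
  assume "a \<in> Aq q" "b \<in> Aq q" then show "tm_add (x (a + b)) (y (a + b)) = tm_add (tm_add (x a) (y a)) (tm_add (x b) (y b))"
    using Der_D(3)[OF assms(2)] Der_D(3)[OF assms(3)] by (simp add: tm_add_ac4)
next
  fix c :: 'a and a :: "'a poly" assume "c \<in> Fq q" "a \<in> Aq q"
  then show "tm_add (x (smult c a)) (y (smult c a)) = tm_scal c (tm_add (x a) (y a))"
    using Der_D(4)[OF assms(2)] Der_D(4)[OF assms(3)] by (simp add: tm_scal_add)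
next
  fix a b :: "'a poly"
  assume "a \<in> Aq q" "b \<in> Aq q"
  then show "tm_add (x (a * b)) (y (a * b)) = tm_add (tm_mult phi e (Psi a) (tm_add (x b) (y b)))
          (tm_mult phi d (tm_add (x a) (y a)) (Phi b))"
    using Der_D(5)[OF assms(2)] Der_D(5)[OF assms(3)]
    by (simp add: tm_add_left tm_add_right[OF assms(1)] tm_add_ac4)
qed

lemma rel_add:
  assumes "rh phi" "(x, x') \<in> ext_rel phi q d e Phi Psi" "(y, y') \<in> ext_rel phi q d e Phi Psi"
  shows "((\<lambda>a. tm_add (x a) (y a)), (\<lambda>a. tm_add (x' a) (y' a))) \<in> ext_rel phi q d e Phi Psi"
proof -
  from assms(2) obtain U where U: "x \<in> Der phi q d e Phi Psi" "x' \<in> Der phi q d e Phi Psi" "is_tmat e d U"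
      "\<And>a. a \<in> Aq q \<Longrightarrow> tm_diff (x a) (x' a) = tm_diff (tm_mult phi d U (Phi a)) (tm_mult phi e (Psi a) U)"
    by (rule rel_D) blast+
  from assms(3) obtain V where V: "y \<in> Der phi q d e Phi Psi" "y' \<in> Der phi q d e Phi Psi" "is_tmat e d V"
      "\<And>a. a \<in> Aq q \<Longrightarrow> tm_diff (y a) (y' a) = tm_diff (tm_mult phi d V (Phi a)) (tm_mult phi e (Psi a) V)"
    by (rule rel_D) blast+
  show ?thesis
  proof (rule rel_I[OF Der_add[OF assms(1) U(1) V(1)] Der_add[OF assms(1) U(2) V(2)] is_tmat_add[OF U(3) V(3)]])
    fix a :: "'a poly" assume a: "a \<in> Aq q"
    have "tm_diff (tm_add (x a) (y a)) (tm_add (x' a) (y' a)) = tm_add (tm_diff (x a) (x' a)) (tm_diff (y a) (y' a))"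
      by (simp add: tm_add_diff_diff)
    also have "\<dots> = tm_diff (tm_mult phi d (tm_add U V) (Phi a)) (tm_mult phi e (Psi a) (tm_add U V))"
      using U(4)[OF a] V(4)[OF a] by (simp add: tm_add_left tm_add_right[OF assms(1)] tm_add_diff_diff)
    finally show "tm_diff (tm_add (x a) (y a)) (tm_add (x' a) (y' a)) = tm_diff (tm_mult phi d (tm_add U V) (Phi a)) (tm_mult phi e (Psi a) (tm_add U V))" .
  qed
qed




lemma Der_lmul:
  assumes "rh phi" "\<And>c. c \<in> Fq q \<Longrightarrow> phi c = c" "hm phi q e Psi" "a \<in> Aq q"
    and "\<delta> \<in> Der phi q d e Phi Psi"
  shows "(\<lambda>b. tm_mult phi e (Psi a) (\<delta> b)) \<in> Der phi q d e Phi Psi"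
  unfolding Der_def
proof (intro CollectI conjI ballI allI impI)
  fix b :: "'a poly"
  assume "b \<notin> Aq q" then show "tm_mult phi e (Psi a) (\<delta> b) = tm_zero"
    using Der_D(1)[OF assms(5)] by (simp add: tm_zero_right[OF assms(1)])
next
  fix b :: "'a poly"
  assume "b \<in> Aq q" then show "is_tmat e d (tm_mult phi e (Psi a) (\<delta> b))"
    using Der_D(2)[OF assms(5)] hm_tmat[OF assms(3,4)] by (simp add: is_tmat_mult[OF assms(1)])
next
  fix b c :: "'a poly"
  assume "b \<in> Aq q" "c \<in> Aq q" then show "tm_mult phi e (Psi a) (\<delta> (b + c)) = tm_add (tm_mult phi e (Psi a) (\<delta> b)) (tm_mult phi e (Psi a) (\<delta> c))"
    using Der_D(3)[OF assms(5)] by (simp add: tm_add_right[OF assms(1)])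
next
  fix c :: 'a and b :: "'a poly" assume "c \<in> Fq q" "b \<in> Aq q"
  then show "tm_mult phi e (Psi a) (\<delta> (smult c b)) = tm_scal c (tm_mult phi e (Psi a) (\<delta> b))"
    using Der_D(4)[OF assms(5)] assms(2) by (simp add: tm_scal_right[OF assms(1)])
next
  fix b c :: "'a poly"
  assume b: "b \<in> Aq q" and c: "c \<in> Aq q"
  have "tm_mult phi e (Psi a) (\<delta> (b * c))
      = tm_add (tm_mult phi e (Psi a) (tm_mult phi e (Psi b) (\<delta> c))) (tm_mult phi e (Psi a) (tm_mult phi d (\<delta> b) (Phi c)))"
    using Der_D(5)[OF assms(5) b c] by (simp add: tm_add_right[OF assms(1)])
  also have "tm_mult phi e (Psi a) (tm_mult phi e (Psi b) (\<delta> c)) = tm_mult phi e (Psi b) (tm_mult phi e (Psi a) (\<delta> c))"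
    by (simp add: tm_assoc[OF assms(1), symmetric] hm_comm[OF assms(3,4) b])
  also have "tm_mult phi e (Psi a) (tm_mult phi d (\<delta> b) (Phi c)) = tm_mult phi d (tm_mult phi e (Psi a) (\<delta> b)) (Phi c)"
    by (simp add: tm_assoc[OF assms(1)])
  finally show "tm_mult phi e (Psi a) (\<delta> (b * c)) = tm_add (tm_mult phi e (Psi b) (tm_mult phi e (Psi a) (\<delta> c)))
          (tm_mult phi d (tm_mult phi e (Psi a) (\<delta> b)) (Phi c))" .
qed

lemma Der_rmul:
  assumes "rh phi" "hm phi q d Phi" "a \<in> Aq q"
    and "\<delta> \<in> Der phi q d e Phi Psi"
  shows "(\<lambda>b. tm_mult phi d (\<delta> b) (Phi a)) \<in> Der phi q d e Phi Psi"
  unfolding Der_def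
proof (intro CollectI conjI ballI allI impI)
  fix b :: "'a poly"
  assume "b \<notin> Aq q" then show "tm_mult phi d (\<delta> b) (Phi a) = tm_zero"
    using Der_D(1)[OF assms(4)] by (simp add: tm_zero_left)
next
  fix b :: "'a poly"
  assume "b \<in> Aq q" then show "is_tmat e d (tm_mult phi d (\<delta> b) (Phi a))"
    using Der_D(2)[OF assms(4)] hm_tmat[OF assms(2,3)] by (simp add: is_tmat_mult[OF assms(1)])
next
  fix b c :: "'a poly"
  assume "b \<in> Aq q" "c \<in> Aq q" then show "tm_mult phi d (\<delta> (b + c)) (Phi a) = tm_add (tm_mult phi d (\<delta> b) (Phi a)) (tm_mult phi d (\<delta> c) (Phi a))"
    using Der_D(3)[OF assms(4)] by (simp add: tm_add_left)
next
  fix c :: 'a and b :: "'a poly" assume "c \<in> Fq q" "b \<in> Aq q"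
  then show "tm_mult phi d (\<delta> (smult c b)) (Phi a) = tm_scal c (tm_mult phi d (\<delta> b) (Phi a))"
    using Der_D(4)[OF assms(4)] by (simp add: tm_scal_left)
next
  fix b c :: "'a poly"
  assume b: "b \<in> Aq q" and c: "c \<in> Aq q"
  have "tm_mult phi d (\<delta> (b * c)) (Phi a)
      = tm_add (tm_mult phi d (tm_mult phi e (Psi b) (\<delta> c)) (Phi a)) (tm_mult phi d (tm_mult phi d (\<delta> b) (Phi c)) (Phi a))"
    using Der_D(5)[OF assms(4) b c] by (simp add: tm_add_left)
  also have "tm_mult phi d (tm_mult phi e (Psi b) (\<delta> c)) (Phi a) = tm_mult phi e (Psi b) (tm_mult phi d (\<delta> c) (Phi a))"
    by (simp add: tm_assoc[OF assms(1)])
  also have "tm_mult phi d (tm_mult phi d (\<delta> b) (Phi c)) (Phi a) = tm_mult phi d (tm_mult phi d (\<delta> b) (Phi a)) (Phi c)"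
    by (simp add: tm_assoc[OF assms(1)] hm_comm[OF assms(2) c assms(3)])
  finally show "tm_mult phi d (\<delta> (b * c)) (Phi a) = tm_add (tm_mult phi e (Psi b) (tm_mult phi d (\<delta> c) (Phi a)))
          (tm_mult phi d (tm_mult phi d (\<delta> b) (Phi a)) (Phi c))" .
qed

lemma rel_lr:
  assumes "rh phi" "\<And>c. c \<in> Fq q \<Longrightarrow> phi c = c" "hm phi q e Psi" "hm phi q d Phi" "a \<in> Aq q"
    and "\<delta> \<in> Der phi q d e Phi Psi"
  shows "((\<lambda>b. tm_mult phi e (Psi a) (\<delta> b)), (\<lambda>b. tm_mult phi d (\<delta> b) (Phi a))) \<in> ext_rel phi q d e Phi Psi"
proof (rule rel_I[OF Der_lmul[OF assms(1,2,3,5,6)] Der_rmul[OF assms(1,4,5,6)] is_tmat_neg[OF Der_D(2)[OF assms(6,5)]]])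
  fix b :: "'a poly" assume b: "b \<in> Aq q"
  have "tm_add (tm_mult phi e (Psi a) (\<delta> b)) (tm_mult phi d (\<delta> a) (Phi b))
      = tm_add (tm_mult phi e (Psi b) (\<delta> a)) (tm_mult phi d (\<delta> b) (Phi a))"
    using Der_D(5)[OF assms(6) assms(5) b] Der_D(5)[OF assms(6) b assms(5)] by (simp add: mult.commute)
  then have "tm_diff (tm_mult phi e (Psi a) (\<delta> b)) (tm_mult phi d (\<delta> b) (Phi a))
      = tm_diff (tm_mult phi e (Psi b) (\<delta> a)) (tm_mult phi d (\<delta> a) (Phi b))"
    by (rule tm_add_swap_eq)
  then show "tm_diff (tm_mult phi e (Psi a) (\<delta> b)) (tm_mult phi d (\<delta> b) (Phi a))
      = tm_diff (tm_mult phi d (tm_neg (\<delta> a)) (Phi b)) (tm_mult phi e (Psi b) (tm_neg (\<delta> a)))"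
    by (simp add: tm_neg_left tm_neg_right[OF assms(1)] tm_diff_neg_neg)
qed

lemma rel_lmul:
  assumes "rh phi" "\<And>c. c \<in> Fq q \<Longrightarrow> phi c = c" "hm phi q e Psi" "a \<in> Aq q"
    and "(x, y) \<in> ext_rel phi q d e Phi Psi"
  shows "((\<lambda>b. tm_mult phi e (Psi a) (x b)), (\<lambda>b. tm_mult phi e (Psi a) (y b))) \<in> ext_rel phi q d e Phi Psi"
proof -
  from assms(5) obtain U where U: "x \<in> Der phi q d e Phi Psi" "y \<in> Der phi q d e Phi Psi" "is_tmat e d U"
      "\<And>b. b \<in> Aq q \<Longrightarrow> tm_diff (x b) (y b) = tm_diff (tm_mult phi d U (Phi b)) (tm_mult phi e (Psi b) U)"
    by (rule rel_D) blast+
  show ?thesis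
  proof (rule rel_I[OF Der_lmul[OF assms(1-4) U(1)] Der_lmul[OF assms(1-4) U(2)]
        is_tmat_mult[OF assms(1) hm_tmat[OF assms(3,4)] U(3)]])
    fix b :: "'a poly" assume b: "b \<in> Aq q"
    have "tm_diff (tm_mult phi e (Psi a) (x b)) (tm_mult phi e (Psi a) (y b))
        = tm_mult phi e (Psi a) (tm_diff (x b) (y b))"
      by (simp add: tm_diff_right[OF assms(1)])
    also have "\<dots> = tm_diff (tm_mult phi e (Psi a) (tm_mult phi d U (Phi b))) (tm_mult phi e (Psi a) (tm_mult phi e (Psi b) U))"
      using U(4)[OF b] by (simp add: tm_diff_right[OF assms(1)])
    also have "\<dots> = tm_diff (tm_mult phi d (tm_mult phi e (Psi a) U) (Phi b)) (tm_mult phi e (Psi b) (tm_mult phi e (Psi a) U))"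
      by (simp add: tm_assoc[OF assms(1), symmetric] hm_comm[OF assms(3,4) b])
    finally show "tm_diff (tm_mult phi e (Psi a) (x b)) (tm_mult phi e (Psi a) (y b))
      = tm_diff (tm_mult phi d (tm_mult phi e (Psi a) U) (Phi b)) (tm_mult phi e (Psi b) (tm_mult phi e (Psi a) U))" .
  qed
qed




definition GG :: "('a \<Rightarrow> 'a) \<Rightarrow> ('a::field poly \<Rightarrow> 'a tmat) \<Rightarrow> 'a poly \<Rightarrow> 'a tmat" where
  "GG psi \<delta> = (\<lambda>a. Gd psi (\<delta> a))"

lemma Der_G:
  fixes phi psi :: "'a::field \<Rightarrow> 'a"
  assumes "rh psi" "\<And>x. psi (phi x) = x" "\<And>c. c \<in> Fq q \<Longrightarrow> psi c = c"
    and "\<delta> \<in> Der phi q d e Phi Psi"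
  shows "GG psi \<delta> \<in> Der psi q e d (GG psi Psi) (GG psi Phi)"
  unfolding Der_def GG_def
proof (intro CollectI conjI ballI allI impI)
  fix a :: "'a poly"
  assume "a \<notin> Aq q" then show "Gd psi (\<delta> a) = tm_zero"
    using Der_D(1)[OF assms(4)] by (simp add: Gd_zero[OF assms(1)])
next
  fix a :: "'a poly"
  assume "a \<in> Aq q" then show "is_tmat d e (Gd psi (\<delta> a))"
    using Der_D(2)[OF assms(4)] by (simp add: is_tmat_Gd[OF assms(1)])
next
  fix a b :: "'a poly"
  assume "a \<in> Aq q" "b \<in> Aq q" then show "Gd psi (\<delta> (a + b)) = tm_add (Gd psi (\<delta> a)) (Gd psi (\<delta> b))"
    using Der_D(3)[OF assms(4)] by (simp add: Gd_add[OF assms(1)])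
next
  fix c :: 'a and a :: "'a poly" assume "c \<in> Fq q" "a \<in> Aq q"
  then show "Gd psi (\<delta> (smult c a)) = tm_scal c (Gd psi (\<delta> a))"
    using Der_D(4)[OF assms(4)] assms(3) by (simp add: Gd_scal[OF assms(1)])
next
  fix a b :: "'a poly"
  assume a: "a \<in> Aq q" and b: "b \<in> Aq q"
  have "Gd psi (\<delta> (a * b)) = Gd psi (\<delta> (b * a))" by (simp add: mult.commute)
  also have "\<dots> = tm_add (tm_mult psi e (Gd psi (\<delta> a)) (Gd psi (Psi b))) (tm_mult psi d (Gd psi (Phi a)) (Gd psi (\<delta> b)))"
    using Der_D(5)[OF assms(4) b a] by (simp add: Gd_add[OF assms(1)] Gd_mult[OF assms(1,2)])
  finally show "Gd psi (\<delta> (a * b)) = tm_add (tm_mult psi d (Gd psi (Phi a)) (Gd psi (\<delta> b))) (tm_mult psi e (Gd psi (\<delta> a)) (Gd psi (Psi b)))"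
    by (simp add: tm_add_comm)
qed

lemma rel_G:
  fixes phi psi :: "'a::field \<Rightarrow> 'a"
  assumes "rh psi" "\<And>x. psi (phi x) = x" "\<And>c. c \<in> Fq q \<Longrightarrow> psi c = c"
    and "(x, y) \<in> ext_rel phi q d e Phi Psi"
  shows "(GG psi x, GG psi y) \<in> ext_rel psi q e d (GG psi Psi) (GG psi Phi)"
proof -
  from assms(4) obtain U where U: "x \<in> Der phi q d e Phi Psi" "y \<in> Der phi q d e Phi Psi" "is_tmat e d U"
      "\<And>a. a \<in> Aq q \<Longrightarrow> tm_diff (x a) (y a) = tm_diff (tm_mult phi d U (Phi a)) (tm_mult phi e (Psi a) U)"
    by (rule rel_D) blast+
  show ?thesis
  proof (rule rel_I[OF Der_G[OF assms(1-3) U(1)] Der_G[OF assms(1-3) U(2)] is_tmat_neg[OF is_tmat_Gd[OF assms(1) U(3)]]])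
    fix a :: "'a poly" assume a: "a \<in> Aq q"
    have "tm_diff (GG psi x a) (GG psi y a) = Gd psi (tm_diff (x a) (y a))"
      by (simp add: GG_def Gd_diff[OF assms(1)])
    also have "\<dots> = tm_diff (tm_mult psi d (GG psi Phi a) (Gd psi U)) (tm_mult psi e (Gd psi U) (GG psi Psi a))"
      using U(4)[OF a] by (simp add: GG_def Gd_diff[OF assms(1)] Gd_mult[OF assms(1,2)])
    also have "\<dots> = tm_diff (tm_mult psi e (tm_neg (Gd psi U)) (GG psi Psi a)) (tm_mult psi d (GG psi Phi a) (tm_neg (Gd psi U)))"
      by (simp add: tm_neg_left tm_neg_right[OF assms(1)] tm_diff_neg_neg)
    finally show "tm_diff (GG psi x a) (GG psi y a) = tm_diff (tm_mult psi e (tm_neg (Gd psi U)) (GG psi Psi a)) (tm_mult psi d (GG psi Phi a) (tm_neg (Gd psi U)))" .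
  qed
qed

lemma GG_GG:
  fixes phi psi :: "'a::field \<Rightarrow> 'a"
  assumes "\<And>x. phi (psi x) = x"
  shows "GG phi (GG psi \<delta>) = \<delta>"
  unfolding GG_def by (simp add: Gd_Gd[of phi psi, OF assms])

lemma GG_add: "rh psi \<Longrightarrow> GG psi (\<lambda>a. tm_add (x a) (y a)) = (\<lambda>a. tm_add (GG psi x a) (GG psi y a))"
  unfolding GG_def by (simp add: Gd_add)




lemma main_gen:
  fixes phi psi :: "'a::field \<Rightarrow> 'a"
  assumes rphi: "rh phi" and rpsi: "rh psi"
    and pp: "\<And>x. psi (phi x) = x" and pp2: "\<And>x. phi (psi x) = x"
    and fphi: "\<And>c. c \<in> Fq q \<Longrightarrow> phi c = c" and fpsi: "\<And>c. c \<in> Fq q \<Longrightarrow> psi c = c"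
    and hPhi: "hm phi q d Phi" and hPsi: "hm phi q e Psi"
  shows "ext_iso q phi d e Phi Psi psi e d (GG psi Psi) (GG psi Phi)"
proof -
  let ?D = "Der phi q d e Phi Psi" and ?R = "ext_rel phi q d e Phi Psi"
  let ?D' = "Der psi q e d (GG psi Psi) (GG psi Phi)" and ?R' = "ext_rel psi q e d (GG psi Psi) (GG psi Phi)"
  let ?G = "GG psi" and ?H = "GG phi"
  have eqR: "equiv ?D ?R" by (rule rel_equiv[OF rphi])
  have eqR': "equiv ?D' ?R'" by (rule rel_equiv[OF rpsi])
  have HG: "\<And>x. ?H (?G x) = x" by (rule GG_GG[of phi psi, OF pp2])
  have GH: "\<And>x. ?G (?H x) = x" by (rule GG_GG[of psi phi, OF pp])
  have DG: "\<And>x. x \<in> ?D \<Longrightarrow> ?G x \<in> ?D'" by (rule Der_G[OF rpsi pp fpsi])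
  have DH: "\<And>y. y \<in> ?D' \<Longrightarrow> ?H y \<in> ?D"
  proof -
    fix y assume y: "y \<in> ?D'"
    have "?H y \<in> Der phi q d e (?H (?G Phi)) (?H (?G Psi))"
      by (rule Der_G[where psi=phi and phi=psi], rule rphi, rule pp2, erule fphi, rule y)
    then show "?H y \<in> ?D" by (simp only: HG)
  qed
  have RG: "\<And>x y. (x, y) \<in> ?R \<Longrightarrow> (?G x, ?G y) \<in> ?R'" by (rule rel_G[OF rpsi pp fpsi])
  have RH: "\<And>x y. (?G x, ?G y) \<in> ?R' \<Longrightarrow> (x, y) \<in> ?R"
  proof -
    fix x y assume xy: "(?G x, ?G y) \<in> ?R'"
    have "(?H (?G x), ?H (?G y)) \<in> ext_rel phi q d e (?H (?G Phi)) (?H (?G Psi))"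
      by (rule rel_G[where psi=phi and phi=psi], rule rphi, rule pp2, erule fphi, rule xy)
    then show "(x, y) \<in> ?R" by (simp only: HG)
  qed
  have cls: "\<And>z. ?G ` (?R `` {z}) = ?R' `` {?G z}"
  proof
    fix z show "?G ` (?R `` {z}) \<subseteq> ?R' `` {?G z}" using RG by blast
  next
    fix z show "?R' `` {?G z} \<subseteq> ?G ` (?R `` {z})"
    proof
      fix y' assume "y' \<in> ?R' `` {?G z}"
      then have "(?G z, ?G (?H y')) \<in> ?R'" by (simp add: GH)
      then have "(z, ?H y') \<in> ?R" by (rule RH)
      then show "y' \<in> ?G ` (?R `` {z})" using GH by (metis Image_singleton_iff image_eqI)
    qed
  qed
  have injG: "inj ?G" by (metis HG injI)
  define F where "F = (\<lambda>X. ?G ` X)"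
  have Fcls: "\<And>z. F (?R `` {z}) = ?R' `` {?G z}" unfolding F_def by (rule cls)
  have some_in: "\<And>X. X \<in> ?D // ?R \<Longrightarrow> (SOME x. x \<in> X) \<in> X"
    using in_quotient_imp_non_empty[OF eqR] by (metis some_in_eq)
  have some_in': "\<And>X. X \<in> ?D' // ?R' \<Longrightarrow> (SOME x. x \<in> X) \<in> X"
    using in_quotient_imp_non_empty[OF eqR'] by (metis some_in_eq)
  have FX: "\<And>X. X \<in> ?D // ?R \<Longrightarrow> F X \<in> ?D' // ?R'"
  proof -
    fix X assume X: "X \<in> ?D // ?R"
    then obtain x where x: "x \<in> ?D" "X = ?R `` {x}" by (rule quotientE) blast
    then show "F X \<in> ?D' // ?R'" using Fcls DG by (simp add: quotientI)
  qed
  have bij: "bij_betw F (Ext1 phi q d e Phi Psi) (Ext1 psi q e d (GG psi Psi) (GG psi Phi))"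
    unfolding Ext1_def bij_betw_def
  proof
    show "inj_on F (?D // ?R)" unfolding F_def
      by (rule inj_onI) (metis injG inj_image_eq_iff)
  next
    show "F ` (?D // ?R) = ?D' // ?R'"
    proof
      show "F ` (?D // ?R) \<subseteq> ?D' // ?R'" using FX by blast
    next
      show "?D' // ?R' \<subseteq> F ` (?D // ?R)"
      proof
        fix X' assume "X' \<in> ?D' // ?R'"
        then obtain y where y: "y \<in> ?D'" "X' = ?R' `` {y}" by (rule quotientE) blast
        have "?R `` {?H y} \<in> ?D // ?R" using DH[OF y(1)] by (rule quotientI)
        moreover have "F (?R `` {?H y}) = X'" using Fcls y(2) GH by simp
        ultimately show "X' \<in> F ` (?D // ?R)" by blast
      qed
    qed
  qed
  have addF: "\<forall>X\<in>Ext1 phi q d e Phi Psi. \<forall>Y\<in>Ext1 phi q d e Phi Psi.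
      F (ext_add phi q d e Phi Psi X Y) = ext_add psi q e d (GG psi Psi) (GG psi Phi) (F X) (F Y)"
  proof (intro ballI)
    fix X Y assume X: "X \<in> Ext1 phi q d e Phi Psi" and Y: "Y \<in> Ext1 phi q d e Phi Psi"
    define x0 where "x0 = (SOME x. x \<in> X)"
    define y0 where "y0 = (SOME x. x \<in> Y)"
    define x1 where "x1 = (SOME x. x \<in> F X)"
    define y1 where "y1 = (SOME x. x \<in> F Y)"
    have x0: "x0 \<in> X" using some_in X unfolding x0_def Ext1_def by blast
    have y0: "y0 \<in> Y" using some_in Y unfolding y0_def Ext1_def by blast
    have x1: "x1 \<in> F X" using some_in' FX X unfolding x1_def Ext1_def by blast
    have y1: "y1 \<in> F Y" using some_in' FX Y unfolding y1_def Ext1_def by blast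
    then obtain y2 where y2: "y2 \<in> Y" "y1 = ?G y2" unfolding F_def by blast
    from x1 obtain x2 where x2: "x2 \<in> X" "x1 = ?G x2" unfolding F_def by blast
    have "(x0, x2) \<in> ?R" using X x0 x2 in_quotient_imp_in_rel[OF eqR] unfolding Ext1_def by blast
    moreover have "(y0, y2) \<in> ?R" using Y y0 y2 in_quotient_imp_in_rel[OF eqR] unfolding Ext1_def by blast
    ultimately have "((\<lambda>a. tm_add (x0 a) (y0 a)), (\<lambda>a. tm_add (x2 a) (y2 a))) \<in> ?R"
      by (rule rel_add[OF rphi])
    then have "(?G (\<lambda>a. tm_add (x0 a) (y0 a)), ?G (\<lambda>a. tm_add (x2 a) (y2 a))) \<in> ?R'"
      by (rule RG)
    then have "?R' `` {?G (\<lambda>a. tm_add (x0 a) (y0 a))} = ?R' `` {?G (\<lambda>a. tm_add (x2 a) (y2 a))}"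
      by (rule equiv_class_eq[OF eqR'])
    then show "F (ext_add phi q d e Phi Psi X Y) = ext_add psi q e d (GG psi Psi) (GG psi Phi) (F X) (F Y)"
      unfolding ext_add_def x0_def[symmetric] y0_def[symmetric] x1_def[symmetric] y1_def[symmetric]
      using Fcls x2(2) y2(2) GG_add[OF rpsi] by simp
  qed
  have smulF: "\<forall>a\<in>Aq q. \<forall>X\<in>Ext1 phi q d e Phi Psi.
      F (ext_smul phi q d e Phi Psi a X) = ext_smul psi q e d (GG psi Psi) (GG psi Phi) a (F X)"
  proof (intro ballI)
    fix a :: "'a poly" and X assume a: "a \<in> Aq q" and X: "X \<in> Ext1 phi q d e Phi Psi"
    define x0 where "x0 = (SOME x. x \<in> X)"
    define x1 where "x1 = (SOME x. x \<in> F X)"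
    have x0: "x0 \<in> X" using some_in X unfolding x0_def Ext1_def by blast
    have x1: "x1 \<in> F X" using some_in' FX X unfolding x1_def Ext1_def by blast
    from x1 obtain x2 where x2: "x2 \<in> X" "x1 = ?G x2" unfolding F_def by blast
    have r02: "(x0, x2) \<in> ?R" using X x0 x2 in_quotient_imp_in_rel[OF eqR] unfolding Ext1_def by blast
    have "((\<lambda>b. tm_mult phi e (Psi a) (x0 b)), (\<lambda>b. tm_mult phi e (Psi a) (x2 b))) \<in> ?R"
      by (rule rel_lmul[OF rphi _ hPsi a r02]) (erule fphi)
    moreover have x2D: "x2 \<in> ?D" using r02 unfolding ext_rel_def by blast
    have "((\<lambda>b. tm_mult phi e (Psi a) (x2 b)), (\<lambda>b. tm_mult phi d (x2 b) (Phi a))) \<in> ?R"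
      by (rule rel_lr[OF rphi _ hPsi hPhi a x2D]) (erule fphi)
    ultimately have "((\<lambda>b. tm_mult phi e (Psi a) (x0 b)), (\<lambda>b. tm_mult phi d (x2 b) (Phi a))) \<in> ?R"
      using eqR unfolding equiv_def trans_def by blast
    then have "(?G (\<lambda>b. tm_mult phi e (Psi a) (x0 b)), ?G (\<lambda>b. tm_mult phi d (x2 b) (Phi a))) \<in> ?R'"
      by (rule RG)
    then have "?R' `` {?G (\<lambda>b. tm_mult phi e (Psi a) (x0 b))} = ?R' `` {?G (\<lambda>b. tm_mult phi d (x2 b) (Phi a))}"
      by (rule equiv_class_eq[OF eqR'])
    moreover have "?G (\<lambda>b. tm_mult phi d (x2 b) (Phi a)) = (\<lambda>b. tm_mult psi d (GG psi Phi a) (x1 b))"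
      unfolding GG_def x2(2) by (simp add: Gd_mult[OF rpsi pp])
    ultimately show "F (ext_smul phi q d e Phi Psi a X) = ext_smul psi q e d (GG psi Psi) (GG psi Phi) a (F X)"
      unfolding ext_smul_def x0_def[symmetric] x1_def[symmetric]
      using Fcls by simp
  qed
  show ?thesis unfolding ext_iso_def using bij addF smulF by blast
qed


lemma frob_rh:
  assumes "prime p" "CHAR('a::field) = p" "q = p ^ m"
  shows "rh (frob q :: 'a \<Rightarrow> 'a)"
proof -
  have pc: "prime CHAR('a)" using assms by simp
  have "\<And>x y::'a. (x + y) ^ q = x ^ q + y ^ q"
    using freshmans_dream'[OF pc, of q m] assms by simp
  then show ?thesis unfolding rh_def frob_def by (simp add: power_mult_distrib)
qed

lemma frob_inj:
  assumes "prime p" "CHAR('a::field) = p" "q = p ^ m"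
  shows "inj (frob q :: 'a \<Rightarrow> 'a)"
proof (rule injI)
  fix x y :: 'a assume h: "frob q x = frob q y"
  have "frob q ((x - y) + y) = frob q (x - y) + frob q y"
    by (rule rh_add[OF frob_rh[OF assms]])
  then have "frob q (x - y) = 0" using h by simp
  then have "(x - y) ^ q = 0" by (simp add: frob_def)
  then show "x = y" by simp
qed

lemma frob_surj:
  assumes "surj (\<lambda>x::'a::field. x ^ p)" "q = p ^ m"
  shows "surj (frob q :: 'a \<Rightarrow> 'a)"
proof -
  have "\<forall>y::'a. \<exists>x. x ^ (p ^ k) = y" for k
  proof (induction k)
    case 0 then show ?case by simp
  next
    case (Suc k)
    show ?case
    proof
      fix y :: 'a
      obtain z where z: "z ^ p = y" using assms(1) by (metis surjD)
      obtain w where w: "w ^ (p ^ k) = z" using Suc by blast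
      have "w ^ (p ^ Suc k) = (w ^ (p ^ k)) ^ p" by (simp add: power_mult[symmetric] mult.commute)
      then show "\<exists>x. x ^ (p ^ Suc k) = y" using z w by auto
    qed
  qed
  then show ?thesis unfolding frob_def assms(2) by (metis surjI)
qed

lemma sigma_dual_GG: "sigma_dual q X = GG (inv (frob q)) X"
  by (simp add: sigma_dual_def sigma_map_def GG_def Gd_def)

theorem theorem7p3:
  fixes p q m d e :: nat and \<theta> :: "'a::field"
    and Phi Psi :: "'a poly \<Rightarrow> 'a tmat"
  assumes "prime p" and "CHAR('a) = p"
    and "surj (\<lambda>x::'a. x ^ p)"
    and "m \<ge> 1" and "q = p ^ m" and "card (Fq q :: 'a set) = q"
    and "t_module q \<theta> d Phi" and "t_module q \<theta> e Psi"
  shows "ext_iso q (tw_tau q) d e Phi Psi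
                   (tw_sigma q) e d (sigma_dual q Psi) (sigma_dual q Phi)"
proof -
  define phi :: "'a \<Rightarrow> 'a" where "phi = frob q"
  define psi where "psi = inv phi"
  have rphi: "rh phi" unfolding phi_def by (rule frob_rh[OF assms(1,2,5)])
  have inj: "inj phi" unfolding phi_def by (rule frob_inj[OF assms(1,2,5)])
  have surj: "surj phi" unfolding phi_def by (rule frob_surj[OF assms(3,5)])
  have pp: "\<And>x. psi (phi x) = x" unfolding psi_def using inj by (simp add: inv_f_f)
  have pp2: "\<And>x. phi (psi x) = x" unfolding psi_def using surj by (simp add: surj_f_inv_f)
  have rpsi: "rh psi"
    unfolding rh_def
  proof (intro conjI allI)
    fix x y
    have "psi (x + y) = psi (phi (psi x) + phi (psi y))" by (simp add: pp2)
    also have "\<dots> = psi (phi (psi x + psi y))" by (simp add: rh_add[OF rphi])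
    finally show "psi (x + y) = psi x + psi y" by (simp add: pp)
  next
    fix x y
    have "psi (x * y) = psi (phi (psi x) * phi (psi y))" by (simp add: pp2)
    also have "\<dots> = psi (phi (psi x * psi y))" by (simp add: rh_mult[OF rphi])
    finally show "psi (x * y) = psi x * psi y" by (simp add: pp)
  qed
  have fphi: "\<And>c. c \<in> Fq q \<Longrightarrow> phi c = c" unfolding phi_def Fq_def frob_def by simp
  have fpsi: "\<And>c. c \<in> Fq q \<Longrightarrow> psi c = c" using fphi pp by metis
  have hPhi: "hm phi q d Phi" using assms(7) unfolding t_module_def tw_tau_def phi_def by (rule tw_module_hm)
  have hPsi: "hm phi q e Psi" using assms(8) unfolding t_module_def tw_tau_def phi_def by (rule tw_module_hm)
  have "ext_iso q phi d e Phi Psi psi e d (GG psi Psi) (GG psi Phi)"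
    by (rule main_gen[OF rphi rpsi pp pp2 _ _ hPhi hPsi]) (erule fphi, erule fpsi)
  then show ?thesis
    unfolding sigma_dual_GG tw_tau_def tw_sigma_def psi_def phi_def .
qed


end
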